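(* Let $\varphi_1,\dots,\varphi_t$ be finitely many inertial endomorphisms of an abelian group $A$ of finite torsion-free rank, let $T$ be the torsion subgroup of $A$, suppose each $\varphi_i$ induces on $A/T$ multiplication by $\frac{m_i}{n_i}$ with $m_i,n_i$ coprime integers, and let $\pi=\pi(n_1\cdots n_t)$. Then there is a $\mathbb{Z}[\varphi_1,\dots,\varphi_t]$-submodule $V$ of $A$ with $V\cong\mathbb{Q}^\pi\oplus\dots\oplus\mathbb{Q}^\pi$ ($r$ summands, for some $r\in\mathbb{N}$) such that $A/V$ is periodic.
   Context: Abelian groups are written additively. An endomorphism $\varphi$ of $A$ is inertial if $(\varphi(X)+X)/X$ is finite for every subgroup $X\le A$. A $\mathbb{Z}[\varphi_1,\dots,\varphi_t]$-submodule is a subgroup invariant under every $\varphi_i$. For the torsion-free group $A/T$, "$\varphi_i$ induces multiplication by $\frac{m_i}{n_i}$" means $n_i\bar\varphi_i(x)=m_ix$ for all $x\in A/T$. $\pi(n)$ is the set of prime divisors of $n$ and $\mathbb{Q}^\pi$ is the ring of rationals whose denominators are products of primes in $\pi$. *)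

theory Defs
  imports Complex_Main "HOL-Computational_Algebra.Primes"
begin

definition nmul :: "nat \<Rightarrow> 'a::ab_group_add \<Rightarrow> 'a" where
  "nmul n x = (\<Sum>_<n. x)"

definition imul :: "int \<Rightarrow> 'a::ab_group_add \<Rightarrow> 'a" where
  "imul k x = (if k \<ge> 0 then nmul (nat k) x else - nmul (nat (- k)) x)"

definition subgrp :: "'a::ab_group_add set \<Rightarrow> bool" where
  "subgrp X \<longleftrightarrow> 0 \<in> X \<and> (\<forall>x\<in>X. \<forall>y\<in>X. x + y \<in> X) \<and> (\<forall>x\<in>X. - x \<in> X)"

definition is_endo :: "('a::ab_group_add \<Rightarrow> 'a) \<Rightarrow> bool" where
  "is_endo f \<longleftrightarrow> (\<forall>x y. f (x + y) = f x + f y)"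

text \<open>(phi(X)+X)/X is finite for every subgroup X: the set of cosets of X
  contained in phi(X)+X is finite.\<close>
definition inertial :: "('a::ab_group_add \<Rightarrow> 'a) \<Rightarrow> bool" where
  "inertial f \<longleftrightarrow> (\<forall>X. subgrp X \<longrightarrow>
      finite {(\<lambda>x. y + x) ` X | y. \<exists>a\<in>X. \<exists>b\<in>X. y = f a + b})"

definition torsion :: "'a::ab_group_add set" where
  "torsion = {a. \<exists>n>0. nmul n a = 0}"

definition zindep :: "'a::ab_group_add set \<Rightarrow> bool" where
  "zindep S \<longleftrightarrow> (\<forall>c :: 'a \<Rightarrow> int. (\<Sum>s\<in>S. imul (c s) s) = 0 \<longrightarrow> (\<forall>s\<in>S. imul (c s) s = 0))"

definition finite_tf_rank :: "'a::ab_group_add itself \<Rightarrow> bool" where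
  "finite_tf_rank _ \<longleftrightarrow> (\<exists>N::nat. \<forall>S :: 'a set. finite S \<and> S \<inter> torsion = {} \<and> zindep S
      \<longrightarrow> card S \<le> N)"

text \<open>The additive group Q^pi, pi given as a predicate on (nat) primes.\<close>
definition Qpi :: "(nat \<Rightarrow> bool) \<Rightarrow> rat set" where
  "Qpi P = {q. \<forall>p::nat. prime p \<and> int p dvd snd (quotient_of q) \<longrightarrow> P p}"

text \<open>Direct sum of r copies of Q^pi, as functions supported on {..<r}.\<close>
definition Qpi_pow :: "(nat \<Rightarrow> bool) \<Rightarrow> nat \<Rightarrow> (nat \<Rightarrow> rat) set" where
  "Qpi_pow P r = {v. (\<forall>i<r. v i \<in> Qpi P) \<and> (\<forall>i\<ge>r. v i = 0)}"

definition grp_iso_to :: "(nat \<Rightarrow> rat) set \<Rightarrow> ('a::ab_group_add) set \<Rightarrow> bool" where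
  "grp_iso_to B V \<longleftrightarrow> (\<exists>f. bij_betw f B V \<and> (\<forall>x\<in>B. \<forall>y\<in>B. f (\<lambda>i. x i + y i) = f x + f y))"

end

theory Submission
  imports Defs
begin



lemma nmul_0[simp]: "nmul 0 x = 0" by (simp add: nmul_def)
lemma nmul_Suc: "nmul (Suc k) x = x + nmul k x" by (simp add: nmul_def add.commute)
lemma nmul_1[simp]: "nmul 1 x = x" by (simp add: nmul_def)
lemma nmul_Suc0[simp]: "nmul (Suc 0) x = x" by (simp add: nmul_def)
lemma nmul_addn: "nmul (a+b) x = nmul a x + nmul b x"
  by (induction a) (simp_all add: nmul_Suc add.assoc)
lemma nmul_add: "nmul k (x+y) = nmul k x + nmul k y"
  by (induction k) (simp_all add: nmul_Suc algebra_simps)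
lemma nmul_zero[simp]: "nmul k 0 = 0"
  by (induction k) (simp_all add: nmul_Suc)
lemma nmul_neg: "nmul k (-x) = - nmul k x"
  by (induction k) (simp_all add: nmul_Suc algebra_simps)
lemma nmul_diff: "nmul k (x-y) = nmul k x - nmul k y"
  using nmul_add[of k x "-y"] nmul_neg[of k y] by simp
lemma nmul_mult: "nmul (a*b) x = nmul a (nmul b x)"
  by (induction a) (simp_all add: nmul_Suc nmul_addn)
lemma nmul_sum: "nmul k (sum f A) = (\<Sum>i\<in>A. nmul k (f i))"
  by (induction A rule: infinite_finite_induct) (simp_all add: nmul_add)
lemma nmul_subn: "b \<le> a \<Longrightarrow> nmul (a - b) x = nmul a x - nmul b x"
  using nmul_addn[of "a-b" b x] by simp

lemma imul_nat[simp]: "imul (int k) x = nmul k x" by (simp add: imul_def)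
lemma imul_diffnat: "imul (int p - int q) x = nmul p x - nmul q x"
proof (cases "q \<le> p")
  case True
  then have "imul (int p - int q) x = imul (int (p - q)) x" by (simp add: of_nat_diff)
  then show ?thesis using True by (simp add: nmul_subn del: of_nat_diff)
next
  case False
  then have "nat (- (int p - int q)) = q - p" by simp
  moreover have "\<not> int p - int q \<ge> 0" using False by simp
  ultimately show ?thesis using False by (simp add: imul_def nmul_subn)
qed
lemma int_split: "(k::int) = int (nat k) - int (nat (-k))" by simp
lemma imul_split: "imul k x = nmul (nat k) x - nmul (nat (-k)) x"
  using imul_diffnat[of "nat k" "nat (-k)" x] int_split[of k] by simp
lemma imul_add_k: "imul (a+b) x = imul a x + imul b x"
proof -
  have "a + b = int (nat a + nat b) - int (nat (-a) + nat (-b))" by simp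
  then have "imul (a+b) x = nmul (nat a + nat b) x - nmul (nat (-a) + nat (-b)) x"
    by (metis imul_diffnat)
  then show ?thesis by (simp add: imul_split[of a] imul_split[of b] nmul_addn)
qed
lemma imul_0[simp]: "imul 0 x = 0" by (simp add: imul_def)
lemma imul_1[simp]: "imul 1 x = x" by (simp add: imul_def nmul_Suc)
lemma imul_neg_k: "imul (-a) x = - imul a x"
  using imul_add_k[of a "-a" x] by (simp add: eq_neg_iff_add_eq_0 add.commute)
lemma imul_diff_k: "imul (a-b) x = imul a x - imul b x"
  using imul_add_k[of a "-b" x] imul_neg_k[of b x] by simp
lemma imul_add: "imul k (x+y) = imul k x + imul k y"
  by (simp add: imul_split nmul_add algebra_simps)
lemma imul_zero[simp]: "imul k 0 = 0" by (simp add: imul_split)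
lemma imul_neg: "imul k (-x) = - imul k x"
  by (simp add: imul_split nmul_neg algebra_simps)
lemma imul_diff: "imul k (x-y) = imul k x - imul k y"
  by (simp add: imul_split nmul_diff algebra_simps)
lemma imul_nmul: "imul k (nmul p x) = nmul p (imul k x)"
  by (simp add: imul_split nmul_diff nmul_mult[symmetric] mult.commute)
lemma imul_natmult: "imul (int p * b) x = nmul p (imul b x)"
proof (induction p)
  case (Suc p)
  have "int (Suc p) * b = b + int p * b" by (simp add: algebra_simps)
  then show ?case using Suc by (simp add: imul_add_k nmul_Suc)
qed simp
lemma imul_mult: "imul (a*b) x = imul a (imul b x)"
proof -
  have "a * b = int (nat a) * b - int (nat (-a)) * b" by (simp add: left_diff_distrib[symmetric])
  then have "imul (a*b) x = imul (int (nat a) * b) x - imul (int (nat (-a)) * b) x"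
    by (metis imul_diff_k)
  then show ?thesis by (simp only: imul_natmult imul_split[of a "imul b x"])
qed
lemma endo_0: "is_endo f \<Longrightarrow> f 0 = 0"
  unfolding is_endo_def by (metis add_cancel_right_right add_0)
lemma endo_add: "is_endo f \<Longrightarrow> f (x+y) = f x + f y"
  unfolding is_endo_def by blast
lemma endo_neg: "is_endo f \<Longrightarrow> f (-x) = - f x"
  using endo_add[of f x "-x"] endo_0[of f] by (metis add.right_inverse minus_unique)
lemma endo_diff: "is_endo f \<Longrightarrow> f (x-y) = f x - f y"
  using endo_add[of f x "-y"] endo_neg[of f y] by simp
lemma endo_nmul: "is_endo f \<Longrightarrow> f (nmul k x) = nmul k (f x)"
  by (induction k) (simp_all add: nmul_Suc endo_add endo_0)
lemma endo_imul: "is_endo f \<Longrightarrow> f (imul k x) = imul k (f x)"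
  by (simp add: imul_split endo_diff endo_nmul)
lemma endo_sum: "is_endo f \<Longrightarrow> f (sum g A) = (\<Sum>i\<in>A. f (g i))"
  by (induction A rule: infinite_finite_induct) (simp_all add: endo_add endo_0)
lemma imul_sum: "imul k (sum g A) = (\<Sum>i\<in>A. imul k (g i))"
  by (induction A rule: infinite_finite_induct) (simp_all add: imul_add)
lemma sum_imul_k: "imul (sum c A) x = (\<Sum>i\<in>A. imul (c i) x)"
  by (induction A rule: infinite_finite_induct) (simp_all add: imul_add_k)
lemma endo_comp: "is_endo f \<Longrightarrow> is_endo g \<Longrightarrow> is_endo (f \<circ> g)"
  unfolding is_endo_def by simp
lemma endo_funpow: "is_endo f \<Longrightarrow> is_endo (f ^^ k)"
  by (induction k) (simp_all add: is_endo_def)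
lemma endo_imul_fun: "is_endo (imul k)" by (simp add: is_endo_def imul_add)
lemma endo_nmul_fun: "is_endo (nmul k)" by (simp add: is_endo_def nmul_add)

lemma tor_0[simp]: "0 \<in> torsion" unfolding torsion_def by (auto intro!: exI[of _ 1])
lemma tor_add: "x \<in> torsion \<Longrightarrow> y \<in> torsion \<Longrightarrow> x + y \<in> torsion"
proof -
  assume "x \<in> torsion" "y \<in> torsion"
  then obtain a b where ab: "a > 0" "nmul a x = 0" "b > 0" "nmul b y = 0" unfolding torsion_def by blast
  have "nmul (a*b) x = 0" by (simp only: mult.commute[of a b]) (simp add: nmul_mult ab)
  moreover have "nmul (a*b) y = 0" by (simp add: nmul_mult ab)
  ultimately have "nmul (a*b) (x+y) = 0" by (simp add: nmul_add)
  moreover have "a * b > 0" using ab by simp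
  ultimately show ?thesis unfolding torsion_def by blast
qed
lemma tor_nmul: "x \<in> torsion \<Longrightarrow> nmul k x \<in> torsion"
proof -
  assume "x \<in> torsion"
  then obtain a where a: "a > 0" "nmul a x = 0" unfolding torsion_def by blast
  have "nmul a (nmul k x) = 0" by (simp only: nmul_mult[symmetric] mult.commute[of a k]) (simp add: nmul_mult a)
  then show ?thesis using a unfolding torsion_def by blast
qed
lemma tor_neg: "x \<in> torsion \<Longrightarrow> - x \<in> torsion"
  unfolding torsion_def by (auto simp: nmul_neg)
lemma tor_diff: "x \<in> torsion \<Longrightarrow> y \<in> torsion \<Longrightarrow> x - y \<in> torsion"
  using tor_add[of x "-y"] tor_neg[of y] by simp
lemma tor_imul: "x \<in> torsion \<Longrightarrow> imul k x \<in> torsion"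
  by (simp add: imul_split tor_diff tor_nmul)
lemma tor_endo: "is_endo f \<Longrightarrow> x \<in> torsion \<Longrightarrow> f x \<in> torsion"
  unfolding torsion_def by (auto simp: endo_nmul[symmetric] endo_0)
lemma tor_sum: "(\<And>i. i \<in> A \<Longrightarrow> g i \<in> torsion) \<Longrightarrow> sum g A \<in> torsion"
  by (induction A rule: infinite_finite_induct) (simp_all add: tor_add)
lemma imul_nat_abs: "imul k x = 0 \<Longrightarrow> nmul (nat \<bar>k\<bar>) x = 0"
  by (cases "k \<ge> 0") (auto simp: imul_def)
lemma tor_imul_rev: "imul k x \<in> torsion \<Longrightarrow> k \<noteq> 0 \<Longrightarrow> x \<in> torsion"
proof -
  assume a: "imul k x \<in> torsion" "k \<noteq> 0"
  then obtain a where "a > 0" "nmul a (imul k x) = 0" unfolding torsion_def by blast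
  then have "imul (int a * k) x = 0" by (simp add: imul_mult)
  then have "nmul (nat \<bar>int a * k\<bar>) x = 0" by (rule imul_nat_abs)
  moreover have "nat \<bar>int a * k\<bar> > 0" using \<open>a > 0\<close> a(2) by (simp add: abs_mult)
  ultimately show ?thesis unfolding torsion_def by blast
qed
lemma nontor_imul: "x \<notin> torsion \<Longrightarrow> imul k x = 0 \<Longrightarrow> k = 0"
  using tor_imul_rev[of k x] by auto




lemma sum_neg_imul: "- (\<Sum>i\<in>A. imul (d i) (b i)) = (\<Sum>i\<in>A. imul (- d i) (b i))"
  by (simp add: sum_negf[symmetric] imul_neg_k)

lemma span_intro: "nmul k a = (\<Sum>i<r. imul (c i) (b i)) \<Longrightarrow> k > 0 \<Longrightarrow> \<exists>k>0. \<exists>c. nmul k a = (\<Sum>i<r. imul (c i) (b i))"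
  by blast

lemma span_from_imul:
  assumes "imul z a = (\<Sum>i<r. imul (d i) (b i))" "z \<noteq> 0"
  shows "\<exists>k>0. \<exists>c. nmul k a = (\<Sum>i<r. imul (c i) (b i))"
proof (cases "z > 0")
  case True
  then have "nmul (nat z) a = imul z a" by (simp add: imul_def)
  then have "nmul (nat z) a = (\<Sum>i<r. imul (d i) (b i))" using assms by simp
  then show ?thesis by (rule span_intro) (use True in simp)
next
  case False
  then have "nmul (nat (-z)) a = - imul z a" using assms(2) by (simp add: imul_def)
  also have "\<dots> = (\<Sum>i<r. imul (- d i) (b i))" using assms(1) sum_neg_imul by metis
  finally show ?thesis by (rule span_intro) (use False assms in simp)
qed

lemma rank_basis:
  assumes "finite_tf_rank TYPE('a::ab_group_add)"
  obtains r and b :: "nat \<Rightarrow> 'a::ab_group_add" where "\<forall>i<r. b i \<notin> torsion"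
    "\<forall>c. (\<Sum>i<r. imul (c i) (b i)) = 0 \<longrightarrow> (\<forall>i<r. c i = 0)"
    "\<forall>a. \<exists>k>0. \<exists>c. nmul k a = (\<Sum>i<r. imul (c i) (b i))"
proof -
  define SS where "SS = {S :: 'a set. finite S \<and> S \<inter> torsion = {} \<and> zindep S}"
  obtain N0 where N0: "\<And>S. S \<in> SS \<Longrightarrow> card S \<le> N0"
    using assms unfolding finite_tf_rank_def SS_def by blast
  have "{} \<in> SS" unfolding SS_def zindep_def by simp
  have fin: "finite (card ` SS)" using N0 by (meson finite_atMost finite_subset image_subset_iff atMost_iff)
  define c0 where "c0 = Max (card ` SS)"
  have "c0 \<in> card ` SS" unfolding c0_def using fin \<open>{} \<in> SS\<close> by (intro Max_in) auto
  then obtain S where S: "S \<in> SS" "card S = c0" by blast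
  have maxc: "\<And>S'. S' \<in> SS \<Longrightarrow> card S' \<le> c0" unfolding c0_def using fin by simp
  have Sf: "finite S" and St: "S \<inter> torsion = {}" and Si: "zindep S" using S unfolding SS_def by auto
  define r where "r = card S"
  obtain b where b: "bij_betw b {..<r} S"
    using ex_bij_betw_nat_finite[OF Sf] unfolding r_def atLeast0LessThan by blast
  have binj: "inj_on b {..<r}" and bim: "b ` {..<r} = S" using b by (auto simp: bij_betw_def)
  have reidx: "\<And>c. (\<Sum>s\<in>S. imul (c s) s) = (\<Sum>i<r. imul (c (b i)) (b i))"
    using sum.reindex_bij_betw[OF b, of "\<lambda>s. imul (c s) s" for c] by simp
  have bnt: "\<forall>i<r. b i \<notin> torsion" using St bim by auto
  have ind: "\<forall>c. (\<Sum>i<r. imul (c i) (b i)) = 0 \<longrightarrow> (\<forall>i<r. c i = 0)"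
  proof (intro allI impI)
    fix c :: "nat \<Rightarrow> int" and i assume h: "(\<Sum>i<r. imul (c i) (b i)) = 0" and i: "i < r"
    define c' where "c' s = c (inv_into {..<r} b s)" for s
    have cb: "\<And>i. i < r \<Longrightarrow> c' (b i) = c i" unfolding c'_def using binj by (simp add: inv_into_f_f)
    have "(\<Sum>s\<in>S. imul (c' s) s) = 0" using h by (simp add: reidx cb)
    then have "imul (c' (b i)) (b i) = 0" using Si i bim unfolding zindep_def by blast
    then show "c i = 0" using cb[OF i] bnt i nontor_imul by metis
  qed
  have span: "\<forall>a. \<exists>k>0. \<exists>c. nmul k a = (\<Sum>i<r. imul (c i) (b i))"
  proof
    fix a
    show "\<exists>k>0. \<exists>c. nmul k a = (\<Sum>i<r. imul (c i) (b i))"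
    proof (cases "a \<in> torsion")
      case True
      then obtain k where "k > 0" "nmul k a = 0" unfolding torsion_def by blast
      moreover have "(\<Sum>i<r. imul ((\<lambda>_. 0::int) i) (b i)) = 0" by simp
      ultimately have "nmul k a = (\<Sum>i<r. imul ((\<lambda>_. 0::int) i) (b i))" by simp
      then show ?thesis by (rule span_intro) fact
    next
      case nt: False
      show ?thesis
      proof (cases "a \<in> S")
        case True
        then obtain j where j: "j < r" "a = b j" using bim by auto
        have "(\<Sum>i<r. imul (if i = j then 1 else 0) (b i)) = (\<Sum>i<r. if i = j then b i else 0)"
          by (intro sum.cong) auto
        also have "\<dots> = a" using j by simp
        finally have "nmul 1 a = (\<Sum>i<r. imul (if i = j then 1 else 0) (b i))" by (simp only: nmul_1)
        then show ?thesis by (rule span_intro) simp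
      next
        case False
        have "insert a S \<notin> SS"
        proof
          assume "insert a S \<in> SS"
          then have "card (insert a S) \<le> c0" by (rule maxc)
          then show False using False Sf S(2) by simp
        qed
        moreover have "finite (insert a S)" "insert a S \<inter> torsion = {}" using Sf St nt by auto
        ultimately have "\<not> zindep (insert a S)" unfolding SS_def by blast
        then obtain c where c: "(\<Sum>s\<in>insert a S. imul (c s) s) = 0"
          and s: "\<exists>s\<in>insert a S. imul (c s) s \<noteq> 0" unfolding zindep_def by blast
        have c2: "imul (c a) a + (\<Sum>s\<in>S. imul (c s) s) = 0" using c False Sf by simp
        have "imul (c a) a \<noteq> 0"
        proof
          assume z: "imul (c a) a = 0"
          then have "(\<Sum>s\<in>S. imul (c s) s) = 0" using c2 by simp
          then have "\<forall>s\<in>S. imul (c s) s = 0" using Si unfolding zindep_def by blast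
          then show False using s z by auto
        qed
        then have "c a \<noteq> 0" by auto
        have "imul (c a) a = - (\<Sum>s\<in>S. imul (c s) s)" using c2 by (simp add: eq_neg_iff_add_eq_0)
        also have "\<dots> = (\<Sum>i<r. imul (- c (b i)) (b i))" by (simp add: reidx sum_neg_imul)
        finally show ?thesis using \<open>c a \<noteq> 0\<close> by (rule span_from_imul)
      qed
    qed
  qed
  show ?thesis by (rule that[OF bnt ind span])
qed



lemma dvd_pow_primes:
  fixes M :: int
  shows "d > 0 \<Longrightarrow> (\<forall>p::nat. prime p \<and> p dvd d \<longrightarrow> int p dvd M) \<Longrightarrow> int d dvd M ^ d"
proof (induction d rule: less_induct)
  case (less d)
  show ?case
  proof (cases "d = 1")
    case True then show ?thesis by simp
  next
    case False
    then obtain p where p: "prime p" "p dvd d" using prime_factor_nat by blast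
    then obtain c where c: "d = p * c" by blast
    have "p \<ge> 2" using p prime_ge_2_nat by blast
    then have "c < d" "c > 0" using c less.prems(1) by auto
    have "\<forall>p'::nat. prime p' \<and> p' dvd c \<longrightarrow> int p' dvd M" using less.prems(2) c by auto
    then have h1: "int c dvd M ^ c" using less.IH \<open>c < d\<close> \<open>c > 0\<close> by blast
    have h2: "int p dvd M" using less.prems(2) p by blast
    have "int p * int c dvd M * M ^ c" using mult_dvd_mono[OF h2 h1] .
    then have "int d dvd M ^ Suc c" using c by simp
    moreover have "Suc c \<le> d" using \<open>c < d\<close> by simp
    ultimately show ?thesis by (meson dvd_trans le_imp_power_dvd)
  qed
qed

lemma qpi_char:
  fixes M :: int
  assumes "M \<noteq> 0"
  shows "q \<in> Qpi (\<lambda>p. prime p \<and> int p dvd M) \<longleftrightarrow> (\<exists>J. of_int (M ^ J) * q \<in> \<int>)"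
proof -
  obtain a d where ad: "quotient_of q = (a, d)" by (cases "quotient_of q")
  have d0: "d > 0" using ad quotient_of_denom_pos by blast
  have cop: "coprime a d" using ad quotient_of_coprime by blast
  have qd: "q = of_int a / of_int d" using ad quotient_of_div by blast
  show ?thesis
  proof
    assume "q \<in> Qpi (\<lambda>p. prime p \<and> int p dvd M)"
    then have h: "\<forall>p::nat. prime p \<and> int p dvd d \<longrightarrow> int p dvd M" unfolding Qpi_def using ad by auto
    have "\<forall>p::nat. prime p \<and> p dvd nat d \<longrightarrow> int p dvd M"
    proof (intro allI impI)
      fix p :: nat assume "prime p \<and> p dvd nat d"
      then have "prime p" "int p dvd int (nat d)" by (simp, simp only: int_dvd_int_iff)
      then show "int p dvd M" using h d0 by simp
    qed
    then have "int (nat d) dvd M ^ nat d" using dvd_pow_primes[of "nat d" M] d0 by simp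
    then obtain k where k: "M ^ nat d = d * k" using d0 by auto
    have "of_int (M ^ nat d) * q = of_int (k * a)" using k d0 qd by (simp add: field_simps)
    then show "\<exists>J. of_int (M ^ J) * q \<in> \<int>" by (metis Ints_of_int)
  next
    assume "\<exists>J. of_int (M ^ J) * q \<in> \<int>"
    then obtain J z where z: "of_int (M ^ J) * q = (of_int z :: rat)" by (auto elim!: Ints_cases)
    then have "of_int (M ^ J) * of_int a = (of_int (z * d) :: rat)" using qd d0 by (simp add: field_simps)
    then have "M ^ J * a = z * d" by (metis of_int_eq_iff of_int_mult mult.commute)
    then have "d dvd M ^ J * a" by simp
    then have dM: "d dvd M ^ J" using cop by (simp add: coprime_dvd_mult_left_iff coprime_commute)
    show "q \<in> Qpi (\<lambda>p. prime p \<and> int p dvd M)"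
      unfolding Qpi_def
    proof (intro CollectI allI impI conjI)
      fix p :: nat assume "prime p \<and> int p dvd snd (quotient_of q)"
      then have p: "prime p" "int p dvd d" using ad by auto
      then have "int p dvd M ^ J" using dM dvd_trans by blast
      moreover have "prime (int p)" using p by simp
      ultimately show "int p dvd M" using prime_dvd_power by blast
    qed blast
  qed
qed



lemma nmul_dvd_zero: "nmul a x = 0 \<Longrightarrow> a dvd b \<Longrightarrow> nmul b x = 0"
  by (metis dvd_def mult.commute nmul_mult nmul_zero)

locale cons =
  fixes th :: "'a::ab_group_add \<Rightarrow> 'a" and M :: int and r :: nat and E :: "nat \<Rightarrow> 'a"
  assumes th_endo: "is_endo th" and Mnz: "M \<noteq> 0"
    and EK: "\<And>i. i < r \<Longrightarrow> imul M (th (E i)) = E i"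
    and Eind: "\<And>c. (\<Sum>i<r. imul (c i) (E i)) = 0 \<Longrightarrow> \<forall>i<r. c i = 0"
begin

definition K where "K = {x. imul M (th x) = x}"
definition L :: "(nat \<Rightarrow> int) \<Rightarrow> 'a" where "L c = (\<Sum>i<r. imul (c i) (E i))"
definition intg :: "nat \<Rightarrow> (nat \<Rightarrow> rat) \<Rightarrow> bool" where
  "intg J q \<longleftrightarrow> (\<forall>i<r. of_int (M ^ J) * q i \<in> \<int>)"
definition coef :: "nat \<Rightarrow> (nat \<Rightarrow> rat) \<Rightarrow> nat \<Rightarrow> int" where
  "coef J q i = \<lfloor>of_int (M ^ J) * q i\<rfloor>"
definition G where "G J q = (th ^^ J) (L (coef J q))"
definition g where "g q = G (SOME J. intg J q) q"

lemma K_add: "x \<in> K \<Longrightarrow> y \<in> K \<Longrightarrow> x + y \<in> K"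
  unfolding K_def using th_endo by (simp add: endo_add imul_add)
lemma K_imul: "x \<in> K \<Longrightarrow> imul k x \<in> K"
  unfolding K_def using th_endo by (simp add: endo_imul imul_mult[symmetric] mult.commute)
    (metis endo_imul imul_mult mult.commute th_endo)
lemma K_0: "0 \<in> K" unfolding K_def using th_endo by (simp add: endo_0)
lemma K_sum: "(\<And>i. i \<in> A \<Longrightarrow> f i \<in> K) \<Longrightarrow> sum f A \<in> K"
  by (induction A rule: infinite_finite_induct) (simp_all add: K_0 K_add)
lemma K_th: "x \<in> K \<Longrightarrow> th x \<in> K"
  unfolding K_def using th_endo by (simp add: endo_imul[symmetric])
lemma th_imul: "x \<in> K \<Longrightarrow> th (imul M x) = x"
  unfolding K_def using th_endo by (simp add: endo_imul)
lemma K_thpow: "x \<in> K \<Longrightarrow> (th ^^ J) x \<in> K"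
  by (induction J) (simp_all add: K_th)
lemma imul_thpow: "x \<in> K \<Longrightarrow> imul (M ^ J) ((th ^^ J) x) = x"
proof (induction J arbitrary: x)
  case (Suc J)
  have "imul (M ^ Suc J) ((th ^^ Suc J) x) = imul (M ^ J) (imul M ((th ^^ J) (th x)))"
    by (simp only: funpow_Suc_right comp_apply power_Suc2 imul_mult)
  also have "imul M ((th ^^ J) (th x)) = (th ^^ J) (imul M (th x))"
    using endo_funpow[OF th_endo] endo_imul by metis
  also have "imul M (th x) = x" using Suc.prems unfolding K_def by simp
  finally show ?case using Suc by simp
qed simp
lemma thpow_add: "(th ^^ J) (x + y) = (th ^^ J) x + (th ^^ J) y"
  using endo_funpow[OF th_endo] endo_add by metis
lemma thpow_imul: "(th ^^ J) (imul k x) = imul k ((th ^^ J) x)"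
  using endo_funpow[OF th_endo] endo_imul by metis
lemma thpow_0: "(th ^^ J) 0 = 0"
  using endo_funpow[OF th_endo] endo_0 by metis

lemma E_K: "i < r \<Longrightarrow> E i \<in> K" unfolding K_def using EK by simp
lemma L_K: "L c \<in> K" unfolding L_def by (intro K_sum K_imul E_K) simp
lemma L_add: "L (\<lambda>i. c i + d i) = L c + L d"
  unfolding L_def by (simp add: imul_add_k sum.distrib)
lemma L_imul: "L (\<lambda>i. k * c i) = imul k (L c)"
  unfolding L_def by (simp add: imul_sum imul_mult)
lemma L_cong: "(\<And>i. i < r \<Longrightarrow> c i = d i) \<Longrightarrow> L c = L d"
  unfolding L_def by (intro sum.cong) auto
lemma L_inj: "L c = L d \<Longrightarrow> i < r \<Longrightarrow> c i = d i"
proof -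
  assume "L c = L d" "i < r"
  then have "(\<Sum>i<r. imul (c i - d i) (E i)) = 0"
    unfolding L_def by (simp add: imul_diff_k sum_subtractf)
  then show ?thesis using Eind \<open>i < r\<close> by fastforce
qed

lemma coef_eq: "of_int (M ^ J) * q i \<in> \<int> \<Longrightarrow> of_int (coef J q i) = of_int (M ^ J) * q i"
  unfolding coef_def by (metis Ints_cases floor_of_int)

lemma intg_Suc: "intg J q \<Longrightarrow> intg (Suc J) q"
  unfolding intg_def
proof (intro allI impI)
  fix i assume "\<forall>i<r. rat_of_int (M ^ J) * q i \<in> \<int>" "i < r"
  then have "rat_of_int (M ^ J) * q i \<in> \<int>" by blast
  then have "of_int M * (rat_of_int (M ^ J) * q i) \<in> \<int>" by (simp add: Ints_mult)
  then show "rat_of_int (M ^ Suc J) * q i \<in> \<int>" by (simp add: mult.assoc)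
qed
lemma intg_mono: assumes "intg J q" "J \<le> J'" shows "intg J' q"
  using assms(2,1) by (induction J' rule: dec_induct) (auto intro: intg_Suc)

lemma G_Suc: "intg J q \<Longrightarrow> G (Suc J) q = G J q"
proof -
  assume h: "intg J q"
  have "\<And>i. i < r \<Longrightarrow> coef (Suc J) q i = M * coef J q i"
  proof -
    fix i assume "i < r"
    then have a: "of_int (M ^ J) * q i \<in> \<int>" and b: "of_int (M ^ Suc J) * q i \<in> \<int>"
      using h intg_Suc[OF h] unfolding intg_def by auto
    have "(of_int (coef (Suc J) q i) :: rat) = of_int (M * coef J q i)"
      using coef_eq[of J q i, OF a] coef_eq[of "Suc J" q i, OF b] by (simp add: mult.assoc)
    then show "coef (Suc J) q i = M * coef J q i" by (simp only: of_int_eq_iff)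
  qed
  then have "L (coef (Suc J) q) = imul M (L (coef J q))"
    using L_cong[of "coef (Suc J) q" "\<lambda>i. M * coef J q i"] L_imul by simp
  then show ?thesis unfolding G_def using th_imul[OF L_K] by (simp only: funpow_Suc_right comp_apply)
qed
lemma G_mono: assumes "intg J q" "J \<le> J'" shows "G J' q = G J q"
  using assms(2,1)
proof (induction J' rule: dec_induct)
  case (step J')
  then show ?case using G_Suc intg_mono by metis
qed simp
lemma G_indep: "intg J q \<Longrightarrow> intg J' q \<Longrightarrow> G J q = G J' q"
  by (metis G_mono nat_le_linear)
lemma g_eq: "intg J q \<Longrightarrow> g q = G J q"
  unfolding g_def by (metis G_indep someI)

end



lemma ints_mono: "of_int (M ^ J) * (x::rat) \<in> \<int> \<Longrightarrow> J \<le> J' \<Longrightarrow> of_int (M ^ J') * x \<in> \<int>"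
proof -
  assume a: "of_int (M ^ J) * (x::rat) \<in> \<int>" "J \<le> J'"
  then have "M ^ J' = M ^ (J' - J) * M ^ J" by (simp add: power_add[symmetric])
  then have "(of_int (M ^ J') :: rat) = of_int (M ^ (J' - J)) * of_int (M ^ J)" by (metis of_int_mult)
  then have "of_int (M ^ J') * x = of_int (M ^ (J' - J)) * (of_int (M ^ J) * x)" by (simp only: mult.assoc)
  then show ?thesis using a(1) Ints_mult Ints_of_int by metis
qed

context cons begin

abbreviation "QP \<equiv> Qpi_pow (\<lambda>p. prime p \<and> int p dvd M) r"

lemma QP_iff: "q \<in> QP \<longleftrightarrow> (\<exists>J. intg J q) \<and> (\<forall>i\<ge>r. q i = 0)"
proof
  assume q: "q \<in> QP"
  then have "\<forall>i<r. \<exists>J. of_int (M ^ J) * q i \<in> \<int>"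
    unfolding Qpi_pow_def using qpi_char[OF Mnz] by blast
  then obtain Jf where Jf: "\<And>i. i < r \<Longrightarrow> of_int (M ^ Jf i) * q i \<in> \<int>" by metis
  have "intg (\<Sum>i<r. Jf i) q" unfolding intg_def
  proof (intro allI impI)
    fix i assume "i < r"
    moreover have "Jf i \<le> (\<Sum>i<r. Jf i)" using \<open>i < r\<close> by (intro member_le_sum) auto
    ultimately show "of_int (M ^ (\<Sum>i<r. Jf i)) * q i \<in> \<int>" using Jf ints_mono by blast
  qed
  then show "(\<exists>J. intg J q) \<and> (\<forall>i\<ge>r. q i = 0)" using q unfolding Qpi_pow_def by blast
next
  assume h: "(\<exists>J. intg J q) \<and> (\<forall>i\<ge>r. q i = 0)"
  then obtain J where J: "intg J q" by blast
  have "\<forall>i<r. q i \<in> Qpi (\<lambda>p. prime p \<and> int p dvd M)"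
  proof (intro allI impI)
    fix i assume "i < r"
    then have "of_int (M ^ J) * q i \<in> \<int>" using J unfolding intg_def by blast
    then show "q i \<in> Qpi (\<lambda>p. prime p \<and> int p dvd M)" using qpi_char[OF Mnz] by blast
  qed
  then show "q \<in> QP" using h unfolding Qpi_pow_def by blast
qed

lemma intg_common: "intg J1 q1 \<Longrightarrow> intg J2 q2 \<Longrightarrow> \<exists>J. intg J q1 \<and> intg J q2"
  by (meson intg_mono max.cobounded1 max.cobounded2)

lemma intg_add: "intg J q1 \<Longrightarrow> intg J q2 \<Longrightarrow> intg J (\<lambda>i. q1 i + q2 i)"
  unfolding intg_def by (simp add: distrib_left Ints_add)
lemma intg_scale: "intg J q \<Longrightarrow> intg J (\<lambda>i. of_int k * q i)"
  unfolding intg_def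
proof (intro allI impI)
  fix i assume "\<forall>i<r. rat_of_int (M ^ J) * q i \<in> \<int>" "i < r"
  then have "of_int k * (rat_of_int (M ^ J) * q i) \<in> \<int>" by (simp add: Ints_mult)
  then show "rat_of_int (M ^ J) * (of_int k * q i) \<in> \<int>" by (simp add: algebra_simps)
qed

lemma QP_add: assumes "q1 \<in> QP" "q2 \<in> QP" shows "(\<lambda>i. q1 i + q2 i) \<in> QP"
proof -
  obtain J1 J2 where "intg J1 q1" "intg J2 q2" using assms QP_iff by meson
  then obtain J where "intg J q1" "intg J q2" using intg_common by blast
  then have "intg J (\<lambda>i. q1 i + q2 i)" by (rule intg_add)
  moreover have "\<forall>i\<ge>r. q1 i + q2 i = 0" using assms QP_iff by simp
  ultimately show ?thesis using QP_iff by blast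
qed
lemma QP_scale: assumes "q \<in> QP" shows "(\<lambda>i. of_int k * q i) \<in> QP"
proof -
  obtain J where "intg J q" using assms QP_iff by meson
  then have "intg J (\<lambda>i. of_int k * q i)" by (rule intg_scale)
  moreover have "\<forall>i\<ge>r. of_int k * q i = 0" using assms QP_iff by simp
  ultimately show ?thesis using QP_iff by blast
qed
lemma QP_0: "(\<lambda>_. 0) \<in> QP"
  unfolding QP_iff intg_def by simp

lemma coef_add: "intg J q1 \<Longrightarrow> intg J q2 \<Longrightarrow> i < r \<Longrightarrow>
    coef J (\<lambda>i. q1 i + q2 i) i = coef J q1 i + coef J q2 i"
proof -
  assume a: "intg J q1" "intg J q2" "i < r"
  have s: "intg J (\<lambda>i. q1 i + q2 i)" using a intg_add by blast
  have "(of_int (coef J (\<lambda>i. q1 i + q2 i) i) :: rat) = of_int (coef J q1 i + coef J q2 i)"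
    using coef_eq[of J "\<lambda>i. q1 i + q2 i" i] coef_eq[of J q1 i] coef_eq[of J q2 i] a s
    unfolding intg_def by (simp add: distrib_left)
  then show ?thesis by (simp only: of_int_eq_iff)
qed
lemma coef_scale: "intg J q \<Longrightarrow> i < r \<Longrightarrow> coef J (\<lambda>i. of_int k * q i) i = k * coef J q i"
proof -
  assume a: "intg J q" "i < r"
  have s: "intg J (\<lambda>i. of_int k * q i)" using a intg_scale by blast
  have "(of_int (coef J (\<lambda>i. of_int k * q i) i) :: rat) = of_int (k * coef J q i)"
    using coef_eq[of J "\<lambda>i. of_int k * q i" i] coef_eq[of J q i] a s
    unfolding intg_def by (simp add: algebra_simps)
  then show ?thesis by (simp only: of_int_eq_iff)
qed

lemma g_add: "q1 \<in> QP \<Longrightarrow> q2 \<in> QP \<Longrightarrow> g (\<lambda>i. q1 i + q2 i) = g q1 + g q2"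
proof -
  assume "q1 \<in> QP" "q2 \<in> QP"
  then obtain J1 J2 where "intg J1 q1" "intg J2 q2" using QP_iff by meson
  then obtain J where J: "intg J q1" "intg J q2" using intg_common by blast
  have "g (\<lambda>i. q1 i + q2 i) = (th ^^ J) (L (coef J (\<lambda>i. q1 i + q2 i)))"
    using g_eq[OF intg_add[OF J]] unfolding G_def .
  also have "L (coef J (\<lambda>i. q1 i + q2 i)) = L (\<lambda>i. coef J q1 i + coef J q2 i)"
    using coef_add[OF J] by (intro L_cong) auto
  also have "\<dots> = L (coef J q1) + L (coef J q2)" by (rule L_add)
  finally show ?thesis using g_eq[OF J(1)] g_eq[OF J(2)] unfolding G_def by (simp add: thpow_add)
qed

lemma g_scale: "q \<in> QP \<Longrightarrow> g (\<lambda>i. of_int k * q i) = imul k (g q)"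
proof -
  assume "q \<in> QP"
  then obtain J where J: "intg J q" using QP_iff by meson
  have "g (\<lambda>i. of_int k * q i) = (th ^^ J) (L (coef J (\<lambda>i. of_int k * q i)))"
    using g_eq[OF intg_scale[OF J]] unfolding G_def .
  also have "L (coef J (\<lambda>i. of_int k * q i)) = L (\<lambda>i. k * coef J q i)"
    using coef_scale[OF J] by (intro L_cong) auto
  also have "\<dots> = imul k (L (coef J q))" by (rule L_imul)
  finally show ?thesis using g_eq[OF J] unfolding G_def by (simp add: thpow_imul)
qed

lemma g_K: assumes "q \<in> QP" shows "g q \<in> K"
proof -
  obtain J where "intg J q" using assms QP_iff by meson
  then have "g q = (th ^^ J) (L (coef J q))" using g_eq unfolding G_def by blast
  then show ?thesis using K_thpow L_K by simp
qed

lemma g_inj: "q1 \<in> QP \<Longrightarrow> q2 \<in> QP \<Longrightarrow> g q1 = g q2 \<Longrightarrow> q1 = q2"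
proof -
  assume a: "q1 \<in> QP" "q2 \<in> QP" "g q1 = g q2"
  then obtain J1 J2 where "intg J1 q1" "intg J2 q2" using QP_iff by meson
  then obtain J where J: "intg J q1" "intg J q2" using intg_common by blast
  have "L (coef J q1) = L (coef J q2)"
  proof -
    have "(th ^^ J) (L (coef J q1)) = (th ^^ J) (L (coef J q2))"
      using a(3) g_eq[OF J(1)] g_eq[OF J(2)] unfolding G_def by metis
    then show ?thesis using imul_thpow[OF L_K, of J "coef J q1"] imul_thpow[OF L_K, of J "coef J q2"] by metis
  qed
  then have c: "\<And>i. i < r \<Longrightarrow> coef J q1 i = coef J q2 i" using L_inj by blast
  show "q1 = q2"
  proof
    fix i show "q1 i = q2 i"
    proof (cases "i < r")
      case True
      have e1: "of_int (coef J q1 i) = of_int (M^J) * q1 i" using J True unfolding intg_def by (intro coef_eq) blast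
      have e2: "of_int (coef J q2 i) = of_int (M^J) * q2 i" using J True unfolding intg_def by (intro coef_eq) blast
      have "of_int (M ^ J) * q1 i = of_int (M ^ J) * q2 i" using e1 e2 c[OF True] by metis
      moreover have "(of_int (M ^ J) :: rat) \<noteq> 0" using Mnz by simp
      ultimately show ?thesis using Mnz by simp
    next
      case False
      have "\<forall>i\<ge>r. q1 i = 0" "\<forall>i\<ge>r. q2 i = 0" using a(1,2) QP_iff by blast+
      then show ?thesis using False by simp
    qed
  qed
qed

lemma g_0: "g (\<lambda>_. 0) = 0"
proof -
  have "intg 0 (\<lambda>_. 0)" unfolding intg_def by simp
  then have "g (\<lambda>_. 0) = L (coef 0 (\<lambda>_. 0))" using g_eq unfolding G_def by simp
  also have "\<dots> = L (\<lambda>_. 0)" unfolding coef_def by simp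
  finally show ?thesis unfolding L_def by simp
qed

lemma g_int: "(\<lambda>i. if i < r then of_int (c i) else 0) \<in> QP \<and> g (\<lambda>i. if i < r then of_int (c i) else 0) = L c"
proof -
  let ?q = "\<lambda>i. if i < r then of_int (c i) else (0::rat)"
  have i: "intg 0 ?q" unfolding intg_def by simp
  then have "?q \<in> QP" unfolding QP_iff by auto
  moreover have "g ?q = L (coef 0 ?q)" using g_eq[OF i] unfolding G_def by simp
  moreover have "L (coef 0 ?q) = L c" unfolding coef_def by (intro L_cong) simp
  ultimately show ?thesis by simp
qed

lemma g_tf: "q \<in> QP \<Longrightarrow> nmul k (g q) = 0 \<Longrightarrow> k > 0 \<Longrightarrow> g q = 0"
proof -
  assume a: "q \<in> QP" "nmul k (g q) = 0" "k > 0"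
  have "g (\<lambda>i. of_int (int k) * q i) = g (\<lambda>_. 0)"
    using g_scale[OF a(1), of "int k"] a(2) g_0 by simp
  then have "(\<lambda>i. of_int (int k) * q i) = (\<lambda>_. 0)"
    using g_inj QP_scale[OF a(1)] QP_0 by blast
  then have "q = (\<lambda>_. 0)" using a(3) by (auto simp: fun_eq_iff)
  then show ?thesis using g_0 by simp
qed

end



fun compd :: "(nat \<Rightarrow> 'a \<Rightarrow> 'a) \<Rightarrow> nat \<Rightarrow> 'a \<Rightarrow> 'a" where
  "compd d 0 = id" | "compd d (Suc k) = compd d k \<circ> d k"

lemma compd_endo: "(\<And>i. i < k \<Longrightarrow> is_endo (d i)) \<Longrightarrow> is_endo (compd d k)"
  by (induction k) (auto simp: is_endo_def)

lemma imul_comm: "imul a (imul b x) = imul b (imul a x)"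
  by (metis imul_mult mult.commute)

lemma compd_tor:
  assumes "\<And>i. i < k \<Longrightarrow> is_endo (d i)"
    and "\<And>i x. i < k \<Longrightarrow> imul (nn i) (d i x) - x \<in> torsion"
  shows "imul (\<Prod>i<k. nn i) (compd d k x) - x \<in> torsion"
  using assms
proof (induction k arbitrary: x)
  case 0 then show ?case by simp
next
  case (Suc k)
  define y where "y = d k x"
  define tau where "tau = imul (\<Prod>i<k. nn i) (compd d k y) - y"
  have tau: "tau \<in> torsion" unfolding tau_def using Suc by simp
  have "imul (\<Prod>i<Suc k. nn i) (compd d (Suc k) x) = imul (nn k) (imul (\<Prod>i<k. nn i) (compd d k y))"
    by (simp add: y_def imul_mult mult.commute)
  also have "imul (\<Prod>i<k. nn i) (compd d k y) = tau + y" unfolding tau_def by simp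
  finally have "imul (\<Prod>i<Suc k. nn i) (compd d (Suc k) x) - x = imul (nn k) tau + (imul (nn k) y - x)"
    by (simp add: imul_add)
  moreover have "imul (nn k) y - x \<in> torsion" unfolding y_def using Suc.prems by simp
  moreover have "imul (nn k) tau + (imul (nn k) y - x) \<in> torsion"
    using tau \<open>imul (nn k) y - x \<in> torsion\<close> by (simp add: tor_add tor_imul)
  ultimately show ?case by (simp only:)
qed




theorem lemma5p1:
  fixes phi :: "nat \<Rightarrow> 'a::ab_group_add \<Rightarrow> 'a"
    and t :: nat and m n :: "nat \<Rightarrow> int"
  assumes rank: "finite_tf_rank TYPE('a)"
    and endo: "\<And>i. i < t \<Longrightarrow> is_endo (phi i)"
    and inert: "\<And>i. i < t \<Longrightarrow> inertial (phi i)"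
    and nz: "\<And>i. i < t \<Longrightarrow> n i \<noteq> 0"
    and cop: "\<And>i. i < t \<Longrightarrow> coprime (m i) (n i)"
    and mult: "\<And>i x. i < t \<Longrightarrow> imul (n i) (phi i x) - imul (m i) x \<in> torsion"
  shows "\<exists>V r. subgrp V \<and> (\<forall>i<t. phi i ` V \<subseteq> V)
           \<and> grp_iso_to (Qpi_pow (\<lambda>p. prime p \<and> int p dvd (\<Prod>i<t. n i)) r) V
           \<and> (\<forall>a. \<exists>k>0. nmul k a \<in> V)"
proof -
  define M where "M = (\<Prod>i<t. n i)"
  have Mnz: "M \<noteq> 0" unfolding M_def using nz by simp
  have ndvd: "\<And>i. i < t \<Longrightarrow> n i dvd M" unfolding M_def by (intro dvd_prodI) auto
  obtain r and b :: "nat \<Rightarrow> 'a" where bnt: "\<forall>i<r. b i \<notin> torsion"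
    and ind: "\<forall>c. (\<Sum>i<r. imul (c i) (b i)) = 0 \<longrightarrow> (\<forall>i<r. c i = 0)"
    and span: "\<forall>a. \<exists>k>0. \<exists>c. nmul k a = (\<Sum>i<r. imul (c i) (b i))"
    by (rule rank_basis[OF rank])
  have "\<forall>i. \<exists>uv::int\<times>int. i < t \<longrightarrow> fst uv * m i + snd uv * n i = 1"
  proof
    fix i show "\<exists>uv::int\<times>int. i < t \<longrightarrow> fst uv * m i + snd uv * n i = 1"
    proof (cases "i < t")
      case True
      then have "gcd (m i) (n i) = 1" using cop coprime_iff_gcd_eq_1 by blast
      then obtain u v where "u * m i + v * n i = 1" using bezout_int[of "m i" "n i"] by metis
      then show ?thesis by (intro exI[of _ "(u,v)"]) simp
    qed simp
  qed
  from choice[OF this] obtain uv where uv: "\<forall>i. i < t \<longrightarrow> fst (uv i) * m i + snd (uv i) * n i = 1" by blast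
  define d where "d i x = imul (fst (uv i)) (phi i x) + imul (snd (uv i)) x" for i x
  have dendo: "\<And>i. i < t \<Longrightarrow> is_endo (d i)"
    unfolding is_endo_def d_def using endo by (simp add: endo_add imul_add ac_simps)
  have dtor: "\<And>i x. i < t \<Longrightarrow> imul (n i) (d i x) - x \<in> torsion"
  proof -
    fix i x assume i: "i < t"
    define u where "u = fst (uv i)"
    define v where "v = snd (uv i)"
    have e1: "imul (n i) (d i x) = imul u (imul (n i) (phi i x)) + imul (v * n i) x"
      unfolding d_def u_def v_def by (simp add: imul_add imul_comm[of "n i"] imul_mult)
    have "x = imul (u * m i + v * n i) x" using uv i unfolding u_def v_def by simp
    then have e2: "imul u (imul (m i) x) + imul (v * n i) x = x"
      by (simp add: imul_add_k imul_mult)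
    have "imul u (imul (n i) (phi i x) - imul (m i) x)
        = imul (n i) (d i x) - (imul u (imul (m i) x) + imul (v * n i) x)"
      by (simp add: e1 imul_diff algebra_simps)
    also have "\<dots> = imul (n i) (d i x) - x" by (simp only: e2)
    finally show "imul (n i) (d i x) - x \<in> torsion"
      using mult[OF i] tor_imul by metis
  qed
  define th where "th = compd d t"
  have thendo: "is_endo th" unfolding th_def using dendo compd_endo by blast
  have thtor: "\<And>x. imul M (th x) - x \<in> torsion"
    unfolding th_def M_def using compd_tor[of t d n] dendo dtor by blast
  have "\<forall>i. \<exists>k. i < r \<longrightarrow> k > 0 \<and> nmul k (imul M (th (b i)) - b i) = 0"
    using thtor unfolding torsion_def by blast
  from choice[OF this] obtain ord where ord: "\<forall>i. i < r \<longrightarrow> ord i > 0 \<and> nmul (ord i) (imul M (th (b i)) - b i) = 0" by blast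
  define e where "e = (\<Prod>i<r. ord i)"
  have e0: "e > 0" unfolding e_def using ord by (simp add: prod_pos)
  define E where "E i = nmul e (b i)" for i
  have EK: "\<And>i. i < r \<Longrightarrow> imul M (th (E i)) = E i"
  proof -
    fix i assume i: "i < r"
    have "ord i dvd e" unfolding e_def using i by (intro dvd_prodI) auto
    then have "nmul e (imul M (th (b i)) - b i) = 0" using ord i nmul_dvd_zero by blast
    then have "nmul e (imul M (th (b i))) = nmul e (b i)" by (simp add: nmul_diff)
    then show "imul M (th (E i)) = E i" unfolding E_def
      using endo_nmul[OF thendo] imul_nmul by metis
  qed
  have Eind: "\<And>c. (\<Sum>i<r. imul (c i) (E i)) = 0 \<Longrightarrow> \<forall>i<r. c i = 0"
  proof -
    fix c assume h: "(\<Sum>i<r. imul (c i) (E i)) = 0"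
    have "\<And>i. imul (c i) (E i) = imul (c i * int e) (b i)" unfolding E_def
      by (simp add: imul_mult)
    then have "(\<Sum>i<r. imul (c i * int e) (b i)) = 0" using h by simp
    then have "\<forall>i<r. c i * int e = 0" using spec[OF ind, of "\<lambda>i. c i * int e"] by simp
    then show "\<forall>i<r. c i = 0" using e0 by simp
  qed
  interpret C: cons th M r E
    by unfold_locales (use thendo Mnz EK Eind in auto)
  let ?QP = "Qpi_pow (\<lambda>p. prime p \<and> int p dvd M) r"
  define U where "U = C.g ` ?QP"
  have U0: "0 \<in> U" unfolding U_def using C.g_0 C.QP_0 by force
  have Uadd: "\<And>x y. x \<in> U \<Longrightarrow> y \<in> U \<Longrightarrow> x + y \<in> U"
  proof -
    fix x y assume "x \<in> U" "y \<in> U"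
    then obtain q1 q2 where q: "q1 \<in> ?QP" "q2 \<in> ?QP" "x = C.g q1" "y = C.g q2" unfolding U_def by (auto elim!: imageE)
    then have "x + y = C.g (\<lambda>i. q1 i + q2 i)" using C.g_add by simp
    moreover have "(\<lambda>i. q1 i + q2 i) \<in> ?QP" using C.QP_add q by simp
    ultimately show "x + y \<in> U" unfolding U_def by (rule image_eqI)
  qed
  have Uneg: "\<And>x. x \<in> U \<Longrightarrow> - x \<in> U"
  proof -
    fix x assume "x \<in> U"
    then obtain q where q: "q \<in> ?QP" "x = C.g q" unfolding U_def by (auto elim!: imageE)
    have "C.g (\<lambda>i. of_int (-1) * q i) = imul (-1) x" using C.g_scale q by blast
    then have "C.g (\<lambda>i. of_int (-1) * q i) = - x" by (simp add: imul_neg_k)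
    moreover have "(\<lambda>i. of_int (-1) * q i) \<in> ?QP" using C.QP_scale[OF q(1)] .
    ultimately show "- x \<in> U" unfolding U_def by (metis image_eqI)
  qed
  have Usub: "subgrp U" unfolding subgrp_def using U0 Uadd Uneg by blast
  have Utf: "\<And>x. x \<in> U \<Longrightarrow> x \<in> torsion \<Longrightarrow> x = 0"
  proof -
    fix x assume "x \<in> U" "x \<in> torsion"
    then obtain q k where "q \<in> ?QP" "x = C.g q" "k > 0" "nmul k x = 0"
      unfolding U_def torsion_def by blast
    then show "x = 0" using C.g_tf by blast
  qed
  have Udiv: "\<And>x i. x \<in> U \<Longrightarrow> i < t \<Longrightarrow> \<exists>w\<in>U. imul (n i) w = imul (m i) x"
  proof -
    fix x i assume "x \<in> U" and i: "i < t"
    then obtain q where q: "q \<in> ?QP" "x = C.g q" unfolding U_def by (auto elim!: imageE)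
    obtain J where J: "C.intg J q" using q C.QP_iff by meson
    obtain Mi where Mi: "M = n i * Mi" using ndvd[OF i] by blast
    define q' where "q' j = of_int (m i) * (q j / of_int (n i))" for j
    have "C.intg (Suc J) q'" unfolding C.intg_def
    proof (intro allI impI)
      fix j assume "j < r"
      then have "of_int (M ^ J) * q j \<in> \<int>" using J unfolding C.intg_def by blast
      then have "of_int (Mi * m i) * (of_int (M ^ J) * q j) \<in> \<int>" by (simp add: Ints_mult)
      moreover have "of_int (M ^ Suc J) * q' j = of_int (Mi * m i) * (of_int (M ^ J) * (q j :: rat))"
        unfolding q'_def using nz[OF i] by (simp add: Mi field_simps)
      ultimately show "of_int (M ^ Suc J) * q' j \<in> \<int>" by (simp only:)
    qed
    moreover have "\<forall>j\<ge>r. q' j = 0" using q(1) C.QP_iff unfolding q'_def by simp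
    ultimately have q'Q: "q' \<in> ?QP" using C.QP_iff by blast
    have "(\<lambda>j. of_int (n i) * q' j) = (\<lambda>j. of_int (m i) * q j)"
      unfolding q'_def using nz[OF i] by (auto simp: fun_eq_iff field_simps)
    then have "imul (n i) (C.g q') = imul (m i) x"
      using C.g_scale[OF q'Q, of "n i"] C.g_scale[OF q(1), of "m i"] q(2) by simp
    moreover have "C.g q' \<in> U" unfolding U_def using q'Q by blast
    ultimately show "\<exists>w\<in>U. imul (n i) w = imul (m i) x" by blast
  qed
  have Uper: "\<And>a. \<exists>k>0. nmul k a \<in> U"
  proof -
    fix a
    obtain k c where k: "k > 0" "nmul k a = (\<Sum>i<r. imul (c i) (b i))" using span by blast
    have "nmul (e * k) a = (\<Sum>i<r. imul (c i) (E i))"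
      unfolding E_def by (simp add: nmul_mult k nmul_sum imul_nmul)
    also have "\<dots> = C.L c" unfolding C.L_def ..
    also have "\<dots> = C.g (\<lambda>i. if i < r then of_int (c i) else 0)" using C.g_int[of c] by simp
    finally have "nmul (e * k) a = C.g (\<lambda>i. if i < r then of_int (c i) else 0)" .
    moreover have "(\<lambda>i. if i < r then of_int (c i) else 0) \<in> ?QP" using C.g_int[of c] by blast
    ultimately have "nmul (e * k) a \<in> U" unfolding U_def by (rule image_eqI)
    moreover have "e * k > 0" using k e0 by simp
    ultimately show "\<exists>k>0. nmul k a \<in> U" by blast
  qed
  define D where "D i = {x \<in> torsion. \<exists>a\<in>U. \<exists>b\<in>U. x = phi i a + b}" for i
  have Dfin: "\<And>i. i < t \<Longrightarrow> finite (D i)"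
  proof -
    fix i assume i: "i < t"
    define h where "h y = (\<lambda>x. y + x) ` U" for y
    have fC: "finite {(\<lambda>x. y + x) ` U | y. \<exists>a\<in>U. \<exists>b\<in>U. y = phi i a + b}"
      using inert[OF i] Usub unfolding inertial_def by blast
    have "h ` D i \<subseteq> {(\<lambda>x. y + x) ` U | y. \<exists>a\<in>U. \<exists>b\<in>U. y = phi i a + b}"
      unfolding h_def D_def by blast
    then have "finite (h ` D i)" using fC finite_subset by blast
    moreover have "inj_on h (D i)"
    proof
      fix y1 y2 assume y: "y1 \<in> D i" "y2 \<in> D i" "h y1 = h y2"
      have "y1 \<in> h y1" unfolding h_def using U0 by force
      then have "y1 \<in> h y2" using y by simp
      then obtain z where z: "z \<in> U" "y1 = y2 + z" unfolding h_def by blast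
      have "z = y1 - y2" using z by simp
      then have "z \<in> torsion" using y unfolding D_def by (simp add: tor_diff)
      then have "z = 0" using Utf z by blast
      then show "y1 = y2" using z by simp
    qed
    ultimately show "finite (D i)" using finite_imageD by blast
  qed
  define DD where "DD = (\<Union>i<t. D i)"
  have DDf: "finite DD" unfolding DD_def using Dfin by blast
  have "\<forall>x. \<exists>k. x \<in> DD \<longrightarrow> k > 0 \<and> nmul k x = 0"
    unfolding DD_def D_def torsion_def by blast
  from choice[OF this] obtain ordd where ordd: "\<forall>x. x \<in> DD \<longrightarrow> ordd x > 0 \<and> nmul (ordd x) x = 0" by blast
  define e' where "e' = (\<Prod>x\<in>DD. ordd x)"
  have e'0: "e' > 0" unfolding e'_def using ordd by (simp add: prod_pos)
  have kill: "\<And>x. x \<in> DD \<Longrightarrow> nmul e' x = 0"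
  proof -
    fix x assume x: "x \<in> DD"
    have "ordd x dvd e'" unfolding e'_def using x DDf by (intro dvd_prodI) auto
    then show "nmul e' x = 0" using ordd x nmul_dvd_zero by blast
  qed
  define V where "V = nmul e' ` U"
  have Vsub: "subgrp V" unfolding subgrp_def V_def
  proof (intro conjI ballI)
    show "0 \<in> nmul e' ` U" using U0 by force
  next
    fix x y assume "x \<in> nmul e' ` U" "y \<in> nmul e' ` U"
    then obtain x0 y0 where "x0 \<in> U" "y0 \<in> U" "x = nmul e' x0" "y = nmul e' y0" by blast
    then show "x + y \<in> nmul e' ` U" using Uadd by (metis image_eqI nmul_add)
  next
    fix x assume "x \<in> nmul e' ` U"
    then obtain x0 where "x0 \<in> U" "x = nmul e' x0" by blast
    then show "- x \<in> nmul e' ` U" using Uneg by (metis image_eqI nmul_neg)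
  qed
  have Vinv: "\<forall>i<t. phi i ` V \<subseteq> V"
  proof (intro allI impI subsetI)
    fix i y assume i: "i < t" and "y \<in> phi i ` V"
    then obtain x where x: "x \<in> U" "y = phi i (nmul e' x)" unfolding V_def by blast
    obtain w where w: "w \<in> U" "imul (n i) w = imul (m i) x" using Udiv[OF x(1) i] by blast
    define dd where "dd = phi i x - w"
    have "imul (n i) dd = imul (n i) (phi i x) - imul (m i) x"
      unfolding dd_def by (simp add: imul_diff w)
    then have "imul (n i) dd \<in> torsion" using mult[OF i] by simp
    then have "dd \<in> torsion" using nz[OF i] tor_imul_rev by blast
    moreover have "dd = phi i x + (- w)" unfolding dd_def by simp
    ultimately have "dd \<in> D i" unfolding D_def using x(1) Uneg[OF w(1)] by blast
    then have "dd \<in> DD" unfolding DD_def using i by blast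
    then have "nmul e' dd = 0" by (rule kill)
    have "y = nmul e' (phi i x)" using x endo_nmul[OF endo[OF i]] by simp
    also have "phi i x = w + dd" unfolding dd_def by simp
    also have "nmul e' (w + dd) = nmul e' w" using \<open>nmul e' dd = 0\<close> by (simp add: nmul_add)
    finally show "y \<in> V" unfolding V_def using w(1) by blast
  qed
  define f where "f q = nmul e' (C.g q)" for q
  have gU: "\<And>q. q \<in> ?QP \<Longrightarrow> C.g q \<in> U" unfolding U_def by blast
  have finj: "inj_on f ?QP"
  proof
    fix q1 q2 assume q: "q1 \<in> ?QP" "q2 \<in> ?QP" "f q1 = f q2"
    have "C.g q1 + - C.g q2 \<in> U" using gU[OF q(1)] Uneg[OF gU[OF q(2)]] by (rule Uadd)
    then have gd: "C.g q1 - C.g q2 \<in> U" by simp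
    have "nmul e' (C.g q1 - C.g q2) = 0" using q(3) unfolding f_def by (simp add: nmul_diff)
    then have "C.g q1 - C.g q2 \<in> torsion" using e'0 unfolding torsion_def by blast
    then have "C.g q1 - C.g q2 = 0" using Utf gd by blast
    then have "C.g q1 = C.g q2" by simp
    then show "q1 = q2" using C.g_inj q(1,2) by blast
  qed
  have fim: "f ` ?QP = V" unfolding V_def U_def f_def by (simp add: image_image)
  have fadd: "\<forall>x\<in>?QP. \<forall>y\<in>?QP. f (\<lambda>i. x i + y i) = f x + f y"
    unfolding f_def by (simp add: C.g_add nmul_add)
  have Viso: "grp_iso_to ?QP V"
    unfolding grp_iso_to_def bij_betw_def using finj fim fadd by blast
  have Vper: "\<forall>a. \<exists>k>0. nmul k a \<in> V"
  proof
    fix a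
    obtain k where "k > 0" "nmul k a \<in> U" using Uper by blast
    then have "nmul (e' * k) a \<in> V" unfolding V_def by (simp add: nmul_mult)
    moreover have "e' * k > 0" using \<open>k > 0\<close> e'0 by simp
    ultimately show "\<exists>k>0. nmul k a \<in> V" by blast
  qed
  show ?thesis using Vsub Vinv Viso Vper unfolding M_def by blast
qed


end
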